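(* If $F\in C^\infty(\mathfrak M)^{\mathrm U(n)\times\mathrm U(n)}$ and $f=F\circ\iota$, then at every $(e^q,J)\in\mathfrak M_0^{\mathrm{reg}}$, $$\nabla_1F(e^q,J)=[d_2f(e^q,J),J]^++\nabla_1f(e^q,J)+R(q)[d_2f(e^q,J),J]^+ .$$
   Context: $G=\mathrm{GL}(n,\mathbb C)$ (real Lie group), $\mathcal G=\mathfrak{gl}(n,\mathbb C)$ (real Lie algebra) with $\langle X,Y\rangle=\Re\operatorname{tr}(XY)$. Let $\mathcal G^+=\mathfrak u(n)$ (anti-Hermitian matrices) and $\mathcal G^-=\mathrm i\,\mathfrak u(n)$ (Hermitian matrices); every $X\in\mathcal G$ decomposes as $X=X^++X^-$ with $X^+=\frac12(X-X^* )\in\mathcal G^+$, $X^-=\frac12(X+X^* )\in\mathcal G^-$; $\mathcal G^\pm_0$ denotes the diagonal matrices in $\mathcal G^\pm$. $\mathfrak M=G\times\mathcal G$; for $F\in C^\infty(\mathfrak M,\mathbb R)$, $\langle\nabla_1F(g,J),X\rangle=\frac{d}{dt}|_{0}F(e^{tX}g,J)$ for all $X\in\mathcal G$. For $\eta\in\mathrm U(n)$, $\mathcal R_\eta(g,J)=(g\eta^{-1},J)$, $\mathcal L_\eta(g,J)=(\eta g,\eta J\eta^{-1})$; $C^\infty(\mathfrak M)^{\mathrm U(n)\times\mathrm U(n)}$ is the set of smooth real functions invariant under all $\mathcal R_\eta$ and all $\mathcal L_\eta$. Let $\mathfrak M_0^{\mathrm{reg}}=\{(e^q,J): J\in\mathcal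 G,\ q=\mathrm{diag}(q_1,\dots,q_n),\ q_i\in\mathbb R,\ q_1>q_2>\dots>q_n\}\subset\mathfrak M$ with inclusion $\iota$. For $f\in C^\infty(\mathfrak M_0^{\mathrm{reg}})$ define $\nabla_1f\in\mathcal G^-_0$ and $d_2f\in\mathcal G$ by $\langle\nabla_1f(e^q,J),X_0\rangle=\frac{d}{dt}|_0f(e^{q+tX_0},J)$ for all $X_0\in\mathcal G^-_0$ and $\langle d_2f(e^q,J),X\rangle=\frac{d}{dt}|_0f(e^q,J+tX)$ for all $X\in\mathcal G$. $R(q)\in\mathrm{End}(\mathcal G)$ is defined by $(R(q)X)_{ii}=0$, $(R(q)X)_{ij}=X_{ij}\coth(q_i-q_j)$ for $i\neq j$. *)

theory Defs
  imports "HOL-Analysis.Analysis"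
begin

text \<open>Complex n x n matrices, viewed as a real vector space (gl(n,C)).\<close>
type_synonym 'n cmat = "((complex, 'n) vec, 'n) vec"
type_synonym 'n rvec = "(real, 'n) vec"

text \<open>C-infinity smoothness on an open set: Frechet differentiable at every point,
  and every directional derivative function is again smooth (coinductively).\<close>
coinductive smooth_on :: "'a::real_normed_vector set \<Rightarrow> ('a \<Rightarrow> 'b::real_normed_vector) \<Rightarrow> bool"
  for S where
  "\<lbrakk> \<forall>x\<in>S. (f has_derivative f' x) (at x); \<forall>v. smooth_on S (\<lambda>x. f' x v) \<rbrakk> \<Longrightarrow> smooth_on S f"

fun mpow :: "'n::finite cmat \<Rightarrow> nat \<Rightarrow> 'n cmat" where
  "mpow X 0 = mat 1"
| "mpow X (Suc k) = X ** mpow X k"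

text \<open>Matrix exponential (power series).\<close>
definition mexp :: "'n::finite cmat \<Rightarrow> 'n cmat" where
  "mexp X = (\<Sum>k. (1 / fact k) *\<^sub>R mpow X k)"

text \<open>Conjugate transpose.\<close>
definition adj :: "'n::finite cmat \<Rightarrow> 'n cmat" where
  "adj X = (\<chi> i j. cnj (X $ j $ i))"

definition mtrace :: "'n::finite cmat \<Rightarrow> complex" where
  "mtrace X = (\<Sum>i\<in>UNIV. X $ i $ i)"

text \<open>The pairing <X,Y> = Re tr(XY).\<close>
definition pair :: "'n::finite cmat \<Rightarrow> 'n cmat \<Rightarrow> real" where
  "pair X Y = Re (mtrace (X ** Y))"

definition comm :: "'n::finite cmat \<Rightarrow> 'n cmat \<Rightarrow> 'n cmat" where
  "comm X Y = X ** Y - Y ** X"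

text \<open>Anti-Hermitian part X^+ = (X - X^*)/2.\<close>
definition pplus :: "'n::finite cmat \<Rightarrow> 'n cmat" where
  "pplus X = (1/2::real) *\<^sub>R (X - adj X)"

text \<open>Unitary group U(n).\<close>
definition unitary :: "'n::finite cmat set" where
  "unitary = {\<eta>. \<eta> ** adj \<eta> = mat 1 \<and> adj \<eta> ** \<eta> = mat 1}"

text \<open>The manifold M = GL(n,C) x gl(n,C).\<close>
definition MM :: "('n::finite cmat \<times> 'n cmat) set" where
  "MM = {(g, J). invertible g}"

text \<open>Smooth real functions on M invariant under all R_eta and L_eta, eta in U(n)
  (eta^{-1} = eta^* for unitary eta).\<close>
definition inv_smooth :: "('n::finite cmat \<times> 'n cmat \<Rightarrow> real) set" where
  "inv_smooth = {F. smooth_on MM F \<and>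
     (\<forall>\<eta>\<in>unitary. \<forall>(g, J)\<in>MM.
        F (g ** adj \<eta>, J) = F (g, J) \<and> F (\<eta> ** g, \<eta> ** J ** adj \<eta>) = F (g, J))}"

text \<open>Gradient nabla_1 F(g,J) in gl(n,C).\<close>
definition nabla1 :: "('n::finite cmat \<times> 'n cmat \<Rightarrow> real) \<Rightarrow> 'n cmat \<Rightarrow> 'n cmat \<Rightarrow> 'n cmat" where
  "nabla1 F g J = (THE Y. \<forall>X. ((\<lambda>t. F (mexp (t *\<^sub>R X) ** g, J)) has_real_derivative pair Y X) (at 0))"

text \<open>Real diagonal matrix diag(q) (element of G_0^-), q in R^n.\<close>
definition dmat :: "real^'n \<Rightarrow> 'n::finite cmat" where
  "dmat q = (\<chi> i j. if i = j then complex_of_real (q $ i) else 0)"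

text \<open>G_0^-: diagonal Hermitian matrices.\<close>
definition diagH :: "'n::finite cmat set" where
  "diagH = range dmat"

text \<open>Regularity: q_1 > q_2 > ... > q_n w.r.t. the order of the index type.\<close>
definition regular :: "real^'n::{finite,linorder} \<Rightarrow> bool" where
  "regular q \<longleftrightarrow> (\<forall>i j. i < j \<longrightarrow> q $ i > q $ j)"

text \<open>For f on M_0^reg, written as f q J = f(e^q, J):
  nabla_1 f in G_0^- and d_2 f in gl(n,C).\<close>
definition nabla1_0 :: "(real^'n \<Rightarrow> 'n cmat \<Rightarrow> real) \<Rightarrow> real^'n \<Rightarrow> 'n::finite cmat \<Rightarrow> 'n cmat" where
  "nabla1_0 f q J = (THE Y. Y \<in> diagH \<and>
     (\<forall>x. ((\<lambda>t. f (q + t *\<^sub>R x) J) has_real_derivative pair Y (dmat x)) (at 0)))"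

definition d2 :: "(real^'n \<Rightarrow> 'n cmat \<Rightarrow> real) \<Rightarrow> real^'n \<Rightarrow> 'n::finite cmat \<Rightarrow> 'n cmat" where
  "d2 f q J = (THE Y. \<forall>X. ((\<lambda>t. f q (J + t *\<^sub>R X)) has_real_derivative pair Y X) (at 0))"

definition coth :: "real \<Rightarrow> real" where
  "coth x = cosh x / sinh x"

definition Rq :: "real^'n \<Rightarrow> 'n::finite cmat \<Rightarrow> 'n cmat" where
  "Rq q X = (\<chi> i j. if i = j then 0 else X $ i $ j * complex_of_real (coth (q $ i - q $ j)))"

end

theory Submission
  imports Defs
begin


typedef (overloaded) 'n opa = "UNIV :: ('n::finite cmat \<Rightarrow>\<^sub>L 'n cmat) set" by auto

instantiation opa :: (finite) real_normed_algebra_1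
begin
definition "zero_opa = Abs_opa 0"
definition "plus_opa x y = Abs_opa (Rep_opa x + Rep_opa y)"
definition "minus_opa x y = Abs_opa (Rep_opa x - Rep_opa y)"
definition "uminus_opa x = Abs_opa (- Rep_opa x)"
definition "scaleR_opa r x = Abs_opa (r *\<^sub>R Rep_opa x)"
definition "times_opa x y = Abs_opa (Rep_opa x o\<^sub>L Rep_opa y)"
definition "one_opa = Abs_opa id_blinfun"
definition "norm_opa x = norm (Rep_opa x)"
definition "dist_opa (x::'a opa) y = norm (x - y)"
definition "sgn_opa (x::'a opa) = scaleR (inverse (norm x)) x"
definition "(uniformity :: ('a opa \<times> 'a opa) filter) = (INF e\<in>{0 <..}. principal {(x, y). dist x y < e})"
definition "open_opa (S :: 'a opa set) = (\<forall>x\<in>S. \<forall>\<^sub>F (x', y) in uniformity. x' = x \<longrightarrow> y \<in> S)"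
instance
proof
  have RA: "\<And>x. Rep_opa (Abs_opa x) = x" by (simp add: Abs_opa_inverse)
  have RI: "\<And>x y. x = y \<longleftrightarrow> Rep_opa x = Rep_opa y" by (simp add: Rep_opa_inject)
  note defs = zero_opa_def plus_opa_def minus_opa_def uminus_opa_def scaleR_opa_def times_opa_def one_opa_def norm_opa_def RA
  show "dist x y = norm (x - y)" for x y :: "'a opa" by (simp add: dist_opa_def)
  show "sgn x = inverse (norm x) *\<^sub>R x" for x :: "'a opa" by (simp add: sgn_opa_def)
  show "(uniformity :: ('a opa \<times> 'a opa) filter) = (INF e\<in>{0 <..}. principal {(x, y). dist x y < e})" by (simp add: uniformity_opa_def)
  show "open U = (\<forall>x\<in>U. \<forall>\<^sub>F (x', y) in uniformity. x' = x \<longrightarrow> y \<in> U)" for U :: "'a opa set" by (simp add: open_opa_def)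
  fix a b c :: "'a opa" and r s :: real
  show "a + b + c = a + (b + c)" by (simp add: RI defs algebra_simps)
  show "a + b = b + a" by (simp add: RI defs algebra_simps)
  show "0 + a = a" by (simp add: RI defs)
  show "- a + a = 0" by (simp add: RI defs)
  show "a - b = a + - b" by (simp add: RI defs)
  show "r *\<^sub>R (a + b) = r *\<^sub>R a + r *\<^sub>R b" by (simp add: RI defs algebra_simps)
  show "(r + s) *\<^sub>R a = r *\<^sub>R a + s *\<^sub>R a" by (simp add: RI defs algebra_simps)
  show "r *\<^sub>R s *\<^sub>R a = (r * s) *\<^sub>R a" by (simp add: RI defs)
  show "1 *\<^sub>R a = a" by (simp add: RI defs)
  show "norm a = 0 \<longleftrightarrow> a = 0" by (simp add: RI defs)
  show "norm (a + b) \<le> norm a + norm b" by (simp add: defs norm_triangle_ineq)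
  show "norm (r *\<^sub>R a) = \<bar>r\<bar> * norm a" by (simp add: defs)
  show "a * b * c = a * (b * c)" by (simp add: RI defs blinfun_eqI)
  show "(a + b) * c = a * c + b * c" by (simp add: RI defs, rule blinfun_eqI, simp add: blinfun.bilinear_simps)
  show "a * (b + c) = a * b + a * c" by (simp add: RI defs, rule blinfun_eqI, simp add: blinfun.bilinear_simps)
  show "r *\<^sub>R a * b = r *\<^sub>R (a * b)" by (simp add: RI defs, rule blinfun_eqI, simp add: blinfun.bilinear_simps)
  show "a * r *\<^sub>R b = r *\<^sub>R (a * b)" by (simp add: RI defs, rule blinfun_eqI, simp add: blinfun.bilinear_simps)
  show "norm (a * b) \<le> norm a * norm b" by (simp add: defs norm_blinfun_compose)
  show "1 * a = a" by (simp add: RI defs blinfun_eqI)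
  show "a * 1 = a" by (simp add: RI defs blinfun_eqI)
  show "(0::'a opa) \<noteq> 1" by (simp add: RI defs) (metis blinfun_apply_id_blinfun blinfun.zero_left zero_neq_one vector_add_component)
  show "norm (1::'a opa) = 1" by (simp add: defs)
qed
end


instance opa :: (finite) banach
proof
  fix X :: "nat \<Rightarrow> 'a opa" assume "Cauchy X"
  hence "Cauchy (\<lambda>n. Rep_opa (X n))"
    by (simp add: Cauchy_def dist_opa_def dist_norm norm_opa_def minus_opa_def Abs_opa_inverse)
  then obtain L where L: "(\<lambda>n. Rep_opa (X n)) \<longlonglongrightarrow> L" using Cauchy_convergent_iff convergent_def by blast
  have "X \<longlonglongrightarrow> Abs_opa L"
    using L by (simp add: LIMSEQ_def dist_opa_def dist_norm norm_opa_def minus_opa_def Abs_opa_inverse)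
  thus "convergent X" by (auto simp: convergent_def)
qed

lemma mm_scaleR_right: "(X::'n::finite cmat) ** (c *\<^sub>R M) = c *\<^sub>R (X ** M)"
  by (simp add: matrix_matrix_mult_def vec_eq_iff scaleR_sum_right)

lemma mm_scaleR_left: "(c *\<^sub>R X :: 'n::finite cmat) ** M = c *\<^sub>R (X ** M)"
  by (simp add: matrix_matrix_mult_def vec_eq_iff scaleR_sum_right)

lemma matrix_add_rdistrib: "((A::'n::finite cmat) + B) ** C = A ** C + B ** C"
  by (vector matrix_matrix_mult_def sum.distrib[symmetric] field_simps)

lemma mm_bilinear: "bilinear (\<lambda>(A::'n::finite cmat) B. A ** B)"
  unfolding bilinear_def
  by (auto intro!: linearI simp: matrix_add_ldistrib matrix_add_rdistrib mm_scaleR_left mm_scaleR_right)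

lemma mm_bounded_bilinear: "bounded_bilinear (\<lambda>(A::'n::finite cmat) B. A ** B)"
  using mm_bilinear bilinear_conv_bounded_bilinear by blast

lemma bl_left: "bounded_linear (\<lambda>M::'n::finite cmat. (X::'n cmat) ** M)"
  unfolding linear_conv_bounded_linear[symmetric]
  by (rule linearI) (simp_all add: matrix_add_ldistrib mm_scaleR_right)

lemma bl_right: "bounded_linear (\<lambda>M::'n::finite cmat. M ** (X::'n cmat))"
  unfolding linear_conv_bounded_linear[symmetric]
  by (rule linearI) (simp_all add: matrix_add_rdistrib mm_scaleR_left)





definition phi :: "'n::finite cmat \<Rightarrow> 'n opa" where
  "phi X = Abs_opa (Blinfun (\<lambda>M. X ** M))"

definition psi :: "'n::finite opa \<Rightarrow> 'n cmat" where
  "psi B = blinfun_apply (Rep_opa B) (mat 1)"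

lemma Rep_phi: "blinfun_apply (Rep_opa (phi X)) M = X ** M"
  by (simp add: phi_def Abs_opa_inverse bounded_linear_Blinfun_apply bl_left)

lemma psi_phi[simp]: "psi (phi X) = X"
  by (simp add: psi_def Rep_phi)

lemma phi_inj: "phi X = phi Y \<Longrightarrow> X = Y"
  by (metis psi_phi)

lemma phi_mult: "phi (X ** Y) = phi X * phi Y"
  by (simp add: Rep_opa_inject[symmetric] times_opa_def Abs_opa_inverse, rule blinfun_eqI,
      simp add: Rep_phi matrix_mul_assoc)

lemma phi_one: "phi (mat 1 :: 'n::finite cmat) = 1"
  by (simp add: Rep_opa_inject[symmetric] one_opa_def Abs_opa_inverse, rule blinfun_eqI,
      simp add: Rep_phi)

lemma phi_linear: "bounded_linear (phi :: 'n::finite cmat \<Rightarrow> 'n opa)"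
proof -
  have "linear (phi :: 'n::finite cmat \<Rightarrow> 'n opa)"
  proof (rule linearI)
    fix x y :: "'n cmat" and c :: real
    show "phi (x + y) = phi x + phi y"
      by (simp add: Rep_opa_inject[symmetric] plus_opa_def Abs_opa_inverse, rule blinfun_eqI,
          simp add: Rep_phi blinfun.bilinear_simps matrix_add_rdistrib)
    show "phi (c *\<^sub>R x) = c *\<^sub>R phi x"
      by (simp add: Rep_opa_inject[symmetric] scaleR_opa_def Abs_opa_inverse, rule blinfun_eqI,
          simp add: Rep_phi blinfun.bilinear_simps mm_scaleR_left)
  qed
  thus ?thesis using linear_conv_bounded_linear by blast
qed

lemma psi_linear: "bounded_linear (psi :: 'n::finite opa \<Rightarrow> 'n cmat)"
proof (rule bounded_linear_intro)
  fix x y :: "'n opa" and r :: real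
  show "psi (x + y) = psi x + psi y"
    by (simp add: psi_def plus_opa_def Abs_opa_inverse blinfun.bilinear_simps)
  show "psi (r *\<^sub>R x) = r *\<^sub>R psi x"
    by (simp add: psi_def scaleR_opa_def Abs_opa_inverse blinfun.bilinear_simps)
  show "norm (psi x) \<le> norm x * norm (mat 1 :: 'n cmat)"
    by (simp add: psi_def norm_opa_def norm_blinfun)
qed

lemma psi_scaleR: "psi (r *\<^sub>R b) = r *\<^sub>R psi b"
  using linear_scale[OF bounded_linear.linear[OF psi_linear]] by blast
lemma phi_scaleR: "phi (r *\<^sub>R b) = r *\<^sub>R phi b"
  using linear_scale[OF bounded_linear.linear[OF phi_linear]] by blast
lemma phi_add: "phi (a + b) = phi a + phi b"
  using linear_add[OF bounded_linear.linear[OF phi_linear]] by blast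
lemma phi_zero: "phi 0 = 0"
  using linear_0[OF bounded_linear.linear[OF phi_linear]] by blast

lemma phi_mpow: "phi (mpow X k) = phi X ^ k"
  by (induction k) (simp_all add: phi_one phi_mult)

lemma mexp_sums: "(\<lambda>k. (1 / fact k) *\<^sub>R mpow X k) sums psi (exp (phi X))"
proof -
  have "(\<lambda>n. phi X ^ n /\<^sub>R fact n) sums exp (phi X)" by (rule exp_converges)
  from bounded_linear.sums[OF psi_linear this]
  have "(\<lambda>n. psi (phi X ^ n /\<^sub>R fact n)) sums psi (exp (phi X))" .
  moreover have "psi (phi X ^ n /\<^sub>R fact n) = (1 / fact n) *\<^sub>R mpow X n" for n
    by (simp only: psi_scaleR phi_mpow[symmetric] psi_phi divide_inverse) simp
  ultimately show ?thesis by simp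
qed

lemma mexp_psi: "mexp X = psi (exp (phi X))"
  using mexp_sums[of X] unfolding mexp_def by (rule sums_unique[symmetric])

lemma phi_mexp: "phi (mexp X) = exp (phi X)"
proof -
  from bounded_linear.sums[OF phi_linear mexp_sums]
  have "(\<lambda>k. phi ((1 / fact k) *\<^sub>R mpow X k)) sums phi (mexp X)" by (simp add: mexp_psi)
  moreover have "phi ((1 / fact k) *\<^sub>R mpow X k) = phi X ^ k /\<^sub>R fact k" for k
    by (simp only: phi_scaleR phi_mpow divide_inverse) simp
  ultimately have "(\<lambda>k. phi X ^ k /\<^sub>R fact k) sums phi (mexp X)" by simp
  thus ?thesis using exp_converges sums_unique2 by blast
qed

lemma mexp_add: "X ** Y = Y ** X \<Longrightarrow> mexp (X + Y) = mexp X ** mexp Y"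
  apply (rule phi_inj)
  apply (simp add: phi_mexp phi_mult phi_add)
  by (metis exp_add_commuting phi_mult)

lemma mexp_zero: "mexp (0::'n::finite cmat) = mat 1"
  by (rule phi_inj) (simp add: phi_mexp phi_one phi_zero)

lemma mexp_deriv: "((\<lambda>t. mexp (t *\<^sub>R X)) has_derivative (\<lambda>h. h *\<^sub>R X)) (at 0)"
proof -
  have "((\<lambda>t. exp (t *\<^sub>R phi X)) has_derivative (\<lambda>h. h *\<^sub>R phi X)) (at 0)"
    using exp_scaleR_has_vector_derivative_right[of "phi X" 0 UNIV] by (simp add: has_vector_derivative_def)
  from bounded_linear.has_derivative[OF psi_linear this]
  have d: "((\<lambda>t. psi (exp (t *\<^sub>R phi X))) has_derivative (\<lambda>h. h *\<^sub>R X)) (at 0)"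
    by (simp only: psi_scaleR psi_phi)
  have e: "(\<lambda>t. mexp (t *\<^sub>R X)) = (\<lambda>t. psi (exp (t *\<^sub>R phi X)))"
    by (rule ext) (simp only: mexp_psi phi_scaleR)
  show ?thesis unfolding e by (rule d)
qed




lemma adj_adj[simp]: "adj (adj X) = X"
  by (simp add: adj_def vec_eq_iff)

lemma adj_mult: "adj (A ** B) = adj B ** adj (A::'n::finite cmat)"
  by (simp add: adj_def vec_eq_iff matrix_matrix_mult_def mult.commute)

lemma adj_add: "adj (A + B) = adj A + adj B"
  by (simp add: adj_def vec_eq_iff)

lemma adj_scaleR: "adj (r *\<^sub>R A) = r *\<^sub>R adj A"
  by (simp add: adj_def vec_eq_iff)

lemma adj_uminus: "adj (- A) = - adj A"
  by (simp add: adj_def vec_eq_iff)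

lemma adj_mat1: "adj (mat 1 :: 'n::finite cmat) = mat 1"
  by (simp add: adj_def vec_eq_iff mat_def)

lemma adj_linear: "bounded_linear (adj :: 'n::finite cmat \<Rightarrow> 'n cmat)"
  unfolding linear_conv_bounded_linear[symmetric]
  by (rule linearI) (simp_all add: adj_add adj_scaleR)

lemma mpow_comm: "mpow X k ** X = X ** mpow X k"
  by (induction k) (simp_all add: matrix_mul_assoc[symmetric])

lemma adj_mpow: "adj (mpow X k) = mpow (adj X) k"
  by (induction k) (simp_all add: adj_mat1 adj_mult mpow_comm)

lemma adj_mexp: "adj (mexp X) = mexp (adj X)"
proof -
  from bounded_linear.sums[OF adj_linear mexp_sums[of X]]
  have "(\<lambda>k. adj ((1 / fact k) *\<^sub>R mpow X k)) sums adj (mexp X)" by (simp add: mexp_psi)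
  hence "(\<lambda>k. (1 / fact k) *\<^sub>R mpow (adj X) k) sums adj (mexp X)" by (simp add: adj_scaleR adj_mpow)
  moreover have "(\<lambda>k. (1 / fact k) *\<^sub>R mpow (adj X) k) sums mexp (adj X)"
    using mexp_sums[of "adj X"] by (simp add: mexp_psi)
  ultimately show ?thesis using sums_unique2 by blast
qed

lemma mexp_inv_l: "mexp (t *\<^sub>R (Y::'n::finite cmat)) ** mexp ((-t) *\<^sub>R Y) = mat 1"
proof -
  have c: "(t *\<^sub>R Y) ** ((-t) *\<^sub>R Y) = ((-t) *\<^sub>R Y) ** (t *\<^sub>R Y)"
    by (simp only: mm_scaleR_left mm_scaleR_right scaleR_scaleR mult.commute)
  have s1: "t *\<^sub>R Y + (-t) *\<^sub>R Y = 0" by simp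
  show ?thesis using mexp_add[OF c] unfolding s1 mexp_zero by simp
qed

lemma mexp_unitary:
  assumes "adj Y = - Y"
  shows "mexp (t *\<^sub>R Y) \<in> unitary"
proof -
  have a: "adj (mexp (t *\<^sub>R Y)) = mexp ((-t) *\<^sub>R Y)"
    using assms by (simp add: adj_mexp adj_scaleR)
  have 1: "mexp (t *\<^sub>R Y) ** mexp ((-t) *\<^sub>R Y) = mat 1" by (rule mexp_inv_l)
  have 2: "mexp ((-t) *\<^sub>R Y) ** mexp (t *\<^sub>R Y) = mat 1" using mexp_inv_l[of "-t" Y] by simp
  show ?thesis unfolding unitary_def mem_Collect_eq a using 1 2 by (rule conjI)
qed

lemma dmat_mult_left: "(dmat u ** M) $ a $ b = complex_of_real (u $ a) * M $ a $ b"
proof -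
  have "(dmat u ** M) $ a $ b = (\<Sum>k\<in>UNIV. if k = a then complex_of_real (u $ a) * M $ k $ b else 0)"
    unfolding matrix_matrix_mult_def dmat_def vec_lambda_beta by (rule sum.cong) auto
  also have "\<dots> = complex_of_real (u $ a) * M $ a $ b" by (simp add: sum.delta)
  finally show ?thesis .
qed

lemma dmat_mult_right: "(M ** dmat u) $ a $ b = M $ a $ b * complex_of_real (u $ b)"
proof -
  have "(M ** dmat u) $ a $ b = (\<Sum>k\<in>UNIV. if k = b then M $ a $ k * complex_of_real (u $ b) else 0)"
    unfolding matrix_matrix_mult_def dmat_def vec_lambda_beta by (rule sum.cong) auto
  also have "\<dots> = M $ a $ b * complex_of_real (u $ b)" by (simp add: sum.delta)
  finally show ?thesis .
qed

lemma dmat_mult: "dmat u ** dmat v = dmat (\<chi> i. u $ i * v $ i)"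
  unfolding vec_eq_iff[of "dmat u ** dmat v"]
  by (auto simp: vec_eq_iff dmat_mult_left) (auto simp: dmat_def)

lemma dmat_comm: "dmat u ** dmat v = dmat v ** dmat u"
  by (simp add: dmat_mult mult.commute)

lemma dmat_add: "dmat (u + v) = dmat u + dmat v"
  by (simp add: dmat_def vec_eq_iff)

lemma dmat_scaleR: "dmat (r *\<^sub>R u) = r *\<^sub>R dmat u"
  by (simp add: dmat_def vec_eq_iff) (simp add: scaleR_conv_of_real)

lemma mat1_dmat: "(mat 1 :: 'n::finite cmat) = dmat (\<chi> i. 1)"
  by (simp add: dmat_def mat_def vec_eq_iff)

lemma mpow_dmat: "mpow (dmat q) k = dmat (\<chi> i. q $ i ^ k)"
  by (induction k) (simp_all add: mat1_dmat dmat_mult)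

lemma dmat_offdiag: "a \<noteq> b \<Longrightarrow> dmat v $ a $ b = 0"
  by (simp add: dmat_def)

lemma dmat_diag: "dmat v $ a $ a = complex_of_real (v $ a)"
  by (simp add: dmat_def)

lemma mexp_dmat: "mexp (dmat (q::real^'n::finite)) = dmat (\<chi> i. exp (q $ i))"
proof -
  { fix a b :: 'n
    have bl: "bounded_linear (\<lambda>M::'n cmat. M $ a $ b)"
      by (rule bounded_linear_compose[OF bounded_linear_vec_nth[of b] bounded_linear_vec_nth[of a]])
    from bounded_linear.sums[OF bl mexp_sums[of "dmat q"]]
    have 1: "(\<lambda>k. ((1 / fact k) *\<^sub>R mpow (dmat q) k) $ a $ b) sums (mexp (dmat q) $ a $ b)"
      by (simp only: mexp_psi)
    have 2: "(\<lambda>k. ((1 / fact k) *\<^sub>R mpow (dmat q) k) $ a $ b) sums (dmat (\<chi> i. exp (q $ i)) $ a $ b)"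
    proof (cases "a = b")
      case True
      have "(\<lambda>k. complex_of_real (q $ a ^ k /\<^sub>R fact k)) sums complex_of_real (exp (q $ a))"
        using sums_of_real[OF exp_converges] .
      moreover have "(\<lambda>k. ((1 / fact k) *\<^sub>R mpow (dmat q) k) $ a $ b) = (\<lambda>k. complex_of_real (q $ a ^ k /\<^sub>R fact k))"
        using True by (simp only: mpow_dmat) (simp add: dmat_def of_real_def divide_inverse)
      moreover have "dmat (\<chi> i. exp (q $ i)) $ a $ b = complex_of_real (exp (q $ a))"
        using True by (simp add: dmat_def)
      ultimately show ?thesis by (simp only:)
    next
      case False
      have "(\<lambda>k. ((1 / fact k) *\<^sub>R mpow (dmat q) k) $ a $ b) = (\<lambda>k. 0)"
        by (simp only: mpow_dmat vector_scaleR_component dmat_offdiag[OF False] scaleR_zero_right)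
      moreover have "dmat (\<chi> i. exp (q $ i)) $ a $ b = 0"
        by (rule dmat_offdiag[OF False])
      ultimately show ?thesis by (simp only: sums_zero)
    qed
    have "mexp (dmat q) $ a $ b = dmat (\<chi> i. exp (q $ i)) $ a $ b" by (rule sums_unique2[OF 1 2]) }
  note E = this
  show ?thesis
    by (rule iffD2[OF vec_eq_iff], rule allI, rule iffD2[OF vec_eq_iff], rule allI, rule E)
qed




definition um :: "'n \<Rightarrow> 'n \<Rightarrow> complex \<Rightarrow> 'n::finite cmat" where
  "um i j c = (\<chi> a b. if a = i \<and> b = j then c else 0)"

lemma mult_um: "(X ** um i j c) $ a $ b = (if b = j then X $ a $ i * c else 0)"
proof -
  have "(X ** um i j c) $ a $ b = (\<Sum>k\<in>UNIV. if k = i then (if b = j then X $ a $ i * c else 0) else 0)"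
    unfolding matrix_matrix_mult_def um_def vec_lambda_beta by (rule sum.cong) auto
  also have "\<dots> = (if b = j then X $ a $ i * c else 0)" by (simp add: sum.delta)
  finally show ?thesis .
qed

lemma um_mult: "(um i j c ** X) $ a $ b = (if a = i then c * X $ j $ b else 0)"
proof -
  have "(um i j c ** X) $ a $ b = (\<Sum>k\<in>UNIV. if k = j then (if a = i then c * X $ j $ b else 0) else 0)"
    unfolding matrix_matrix_mult_def um_def vec_lambda_beta by (rule sum.cong) auto
  also have "\<dots> = (if a = i then c * X $ j $ b else 0)" by (simp add: sum.delta)
  finally show ?thesis .
qed

lemma pair_expand: "pair X Y = Re (\<Sum>a\<in>UNIV. \<Sum>b\<in>UNIV. X $ a $ b * Y $ b $ a)"
  by (simp add: pair_def mtrace_def matrix_matrix_mult_def)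

lemma pair_um: "pair X (um i j c) = Re (X $ j $ i * c)"
proof -
  have "mtrace (X ** um i j c) = (\<Sum>a\<in>UNIV. if a = j then X $ j $ i * c else 0)"
    unfolding mtrace_def mult_um by (rule sum.cong) auto
  also have "\<dots> = X $ j $ i * c" by (simp add: sum.delta)
  finally show ?thesis by (simp add: pair_def)
qed

lemma pair_add_right: "pair X (A + B) = pair X A + pair X B"
  by (simp add: pair_def matrix_add_ldistrib mtrace_def sum.distrib)

lemma pair_add_left: "pair (A + B) X = pair A X + pair B X"
  by (simp add: pair_def matrix_add_rdistrib mtrace_def sum.distrib)

lemma pair_diff_right: "pair X (A - B) = pair X A - pair X B"
  using pair_add_right[of X "A - B" B] by simp

lemma pair_diff_left: "pair (A - B) X = pair A X - pair B X"
  using pair_add_left[of "A - B" B X] by simp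

lemma pair_scaleR_right: "pair X (r *\<^sub>R A) = r * pair X A"
  by (simp add: pair_def mm_scaleR_right mtrace_def scaleR_sum_right[symmetric])

lemma pair_scaleR_left: "pair (r *\<^sub>R A) X = r * pair A X"
  by (simp add: pair_def mm_scaleR_left mtrace_def scaleR_sum_right[symmetric])

lemma pair_sym: "pair A B = pair B (A::'n::finite cmat)"
  unfolding pair_def mtrace_def using trace_mul_sym[of A B] by (simp add: trace_def)

lemma pair_assoc: "pair (A ** B) C = pair A (B ** (C::'n::finite cmat))"
  by (simp add: matrix_mul_assoc pair_def)

lemma adj_um: "adj (um i j c) = um j i (cnj c)"
  by (auto simp: adj_def um_def vec_eq_iff)

lemma dmat_um: "dmat v ** um i j c = um i j (complex_of_real (v $ i) * c)"
  by (auto simp: vec_eq_iff dmat_mult_left um_def)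

lemma um_dmat: "um i j c ** dmat v = um i j (c * complex_of_real (v $ j))"
  by (auto simp: vec_eq_iff dmat_mult_right um_def)

lemma pair_nondeg:
  assumes "\<And>X. pair A X = pair B (X::'n::finite cmat)"
  shows "A = B"
proof -
  { fix i j :: 'n
    have "Re (A $ i $ j) = Re (B $ i $ j)" using assms[of "um j i 1"] by (simp add: pair_um)
    moreover have "Im (A $ i $ j) = Im (B $ i $ j)" using assms[of "um j i \<i>"] by (simp add: pair_um)
    ultimately have "A $ i $ j = B $ i $ j" by (rule complex_eqI) }
  thus ?thesis by (simp add: vec_eq_iff)
qed

lemma um_decomp: "(M::'n::finite cmat) = (\<Sum>a\<in>UNIV. \<Sum>b\<in>UNIV. um a b (M $ a $ b))"
proof -
  { fix k l :: 'n
    have "(\<Sum>a\<in>UNIV. \<Sum>b\<in>UNIV. um a b (M $ a $ b)) $ k $ l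
        = (\<Sum>a\<in>UNIV. \<Sum>b\<in>UNIV. if k = a \<and> l = b then M $ a $ b else 0)"
      by (simp add: um_def)
    also have "\<dots> = (\<Sum>a\<in>UNIV. if k = a then (\<Sum>b\<in>UNIV. if l = b then M $ a $ b else 0) else 0)"
      by (rule sum.cong) auto
    also have "\<dots> = M $ k $ l" by (simp add: sum.delta')
    finally have "M $ k $ l = (\<Sum>a\<in>UNIV. \<Sum>b\<in>UNIV. um a b (M $ a $ b)) $ k $ l" by simp }
  note E = this
  show ?thesis
    by (rule iffD2[OF vec_eq_iff], rule allI, rule iffD2[OF vec_eq_iff], rule allI, rule E)
qed

lemma um_split: "um a b c = Re c *\<^sub>R um a b 1 + Im c *\<^sub>R um a b \<i>"
  by (auto simp: um_def vec_eq_iff complex_eq_iff)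

lemma riesz:
  assumes L: "linear (L :: 'n::finite cmat \<Rightarrow> real)"
  shows "\<exists>Y. \<forall>X. L X = pair Y X"
proof -
  define Y :: "'n cmat" where
    "Y = (\<chi> a b. complex_of_real (L (um b a 1)) - \<i> * complex_of_real (L (um b a \<i>)))"
  have "L X = pair Y X" for X
  proof -
    have "L X = L (\<Sum>a\<in>UNIV. \<Sum>b\<in>UNIV. Re (X $ a $ b) *\<^sub>R um a b 1 + Im (X $ a $ b) *\<^sub>R um a b \<i>)"
      by (subst um_decomp[of X]) (simp only: um_split[symmetric])
    also have "\<dots> = (\<Sum>a\<in>UNIV. \<Sum>b\<in>UNIV. Re (X $ a $ b) * L (um a b 1) + Im (X $ a $ b) * L (um a b \<i>))"
      by (simp add: linear_sum[OF L] linear_add[OF L] linear_scale[OF L])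
    also have "\<dots> = (\<Sum>b\<in>UNIV. \<Sum>a\<in>UNIV. Re (X $ a $ b) * L (um a b 1) + Im (X $ a $ b) * L (um a b \<i>))"
      by (rule sum.swap)
    also have "\<dots> = pair Y X"
      by (simp add: pair_expand Y_def Re_sum mult.commute)
    finally show ?thesis .
  qed
  thus ?thesis by blast
qed

lemma chain_real:
  assumes "(F has_derivative L) (at (\<gamma> 0))" "(\<gamma> has_derivative (\<lambda>h. h *\<^sub>R v)) (at 0)"
  shows "((\<lambda>t. F (\<gamma> t)) has_real_derivative L v) (at (0::real))"
proof -
  have "((F \<circ> \<gamma>) has_derivative (L \<circ> (\<lambda>h. h *\<^sub>R v))) (at 0)" by (rule diff_chain_at[OF assms(2) assms(1)])
  moreover have "L \<circ> (\<lambda>h. h *\<^sub>R v) = (\<lambda>h. L v * h)"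
    using linear_scale[OF has_derivative_linear[OF assms(1)]] by (auto simp: fun_eq_iff)
  ultimately show ?thesis by (simp add: has_field_derivative_def o_def)
qed




lemma arith1:
  fixes x y d u w :: real
  assumes "u > 0" "w > 0" "u \<noteq> w" "x - y = d" "y * (u / w) = x * (w / u)"
  shows "x = d / 2 * (1 + (u / w + w / u) / (u / w - w / u))"
proof -
  have y: "y = x * w^2 / u^2" using assms(1,2,5) by (simp add: field_simps power2_eq_square)
  have uw: "u^2 - w^2 \<noteq> 0"
  proof
    assume "u^2 - w^2 = 0"
    hence "u^2 = w^2" by simp
    hence "u = w" using assms(1,2) by (simp add: power2_eq_iff_nonneg)
    thus False using assms(3) by simp
  qed
  have x: "x = d * u^2 / (u^2 - w^2)"
    using assms(4) y assms(1,2) uw by (simp add: field_simps power2_eq_square)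
  have "(1 + (u / w + w / u) / (u / w - w / u)) = 2 * u^2 / (u^2 - w^2)"
    using assms(1,2) uw by (simp add: field_simps power2_eq_square)
  thus ?thesis using x by simp
qed

lemma coth_exp: "coth (a - b) = (exp a / exp b + exp b / exp a) / (exp a / exp b - exp b / exp a)"
proof -
  have e1: "exp (a - b) = exp a / exp b" by (rule exp_diff)
  have e2: "exp (-(a - b)) = exp b / exp a" using exp_diff[of b a] by simp
  have c: "cosh (a - b) = (exp a / exp b + exp b / exp a) / 2"
    unfolding cosh_def e1 e2 by simp
  have s: "sinh (a - b) = (exp a / exp b - exp b / exp a) / 2"
    unfolding sinh_def e1 e2 by simp
  have h: "(A / 2) / (B / 2) = A / (B::real)" for A B by (cases "B = 0") (simp_all add: field_simps)
  show ?thesis unfolding coth_def c s h ..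
qed

lemma pplus_entry: "pplus C $ i $ j = (1/2::real) *\<^sub>R (C $ i $ j - cnj (C $ j $ i))"
  by (simp add: pplus_def adj_def)

lemma final_entries:
  fixes Z C :: "'n::finite cmat" and q :: "real^'n"
  assumes A1: "\<And>i j. pair Z (um i j 1 + um j i (-1)) = pair C (um i j 1 + um j i (-1))"
    and A2: "\<And>i j. pair Z (um i j \<i> + um j i \<i>) = pair C (um i j \<i> + um j i \<i>)"
    and B1: "\<And>i j. i \<noteq> j \<Longrightarrow> pair Z (um i j (complex_of_real (exp (q$i - q$j))) + um j i (- complex_of_real (exp (q$j - q$i)))) = 0"
    and B2: "\<And>i j. i \<noteq> j \<Longrightarrow> pair Z (um i j (\<i> * complex_of_real (exp (q$i - q$j))) + um j i (\<i> * complex_of_real (exp (q$j - q$i)))) = 0"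
    and D: "\<And>i j. i \<noteq> j \<Longrightarrow> q$i \<noteq> q$j"
  shows "Z = pplus C + dmat (\<chi> i. Re (Z$i$i)) + Rq q (pplus C)"
proof -
  { fix i j :: 'n
    have "Z $ i $ j = (pplus C + dmat (\<chi> i. Re (Z$i$i)) + Rq q (pplus C)) $ i $ j"
    proof (cases "i = j")
      case True
      have "Im (Z $ i $ i) = Im (C $ i $ i)" using A2[of i i] by (simp only: pair_add_right pair_um) simp
      thus ?thesis using True by (simp add: complex_eq_iff Rq_def dmat_def pplus_entry)
    next
      case False
      let ?u = "exp (q$i)" and ?w = "exp (q$j)"
      have a1: "Re (Z$i$j) - Re (Z$j$i) = Re (C$i$j) - Re (C$j$i)"
        using A1[of j i] by (simp only: pair_add_right pair_um) simp
      have a2: "Im (Z$i$j) - (- Im (Z$j$i)) = Im (C$i$j) + Im (C$j$i)"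
        using A2[of i j] by (simp only: pair_add_right pair_um) simp
      have b1: "Re (Z$j$i) * (?u / ?w) = Re (Z$i$j) * (?w / ?u)"
        using B1[OF False] by (simp only: pair_add_right pair_um) (simp add: exp_diff)
      have b2: "(- Im (Z$j$i)) * (?u / ?w) = Im (Z$i$j) * (?w / ?u)"
        using B2[OF False] by (simp only: pair_add_right pair_um) (simp add: exp_diff)
      have uw: "?u \<noteq> ?w" using D[OF False] by simp
      have r: "Re (Z$i$j) = (Re (C$i$j) - Re (C$j$i)) / 2 * (1 + (?u / ?w + ?w / ?u) / (?u / ?w - ?w / ?u))"
        by (rule arith1[OF exp_gt_zero exp_gt_zero uw a1 b1])
      have m: "Im (Z$i$j) = (Im (C$i$j) + Im (C$j$i)) / 2 * (1 + (?u / ?w + ?w / ?u) / (?u / ?w - ?w / ?u))"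
        by (rule arith1[OF exp_gt_zero exp_gt_zero uw a2 b2])
      define K where "K = coth (q$i - q$j)"
      have kk: "K = (?u / ?w + ?w / ?u) / (?u / ?w - ?w / ?u)" unfolding K_def by (rule coth_exp)
      have ent: "(pplus C + dmat (\<chi> i. Re (Z$i$i)) + Rq q (pplus C)) $ i $ j
                 = pplus C $ i $ j * (1 + complex_of_real K)"
        using False by (simp add: Rq_def dmat_def K_def distrib_left)
      have pr: "Re (pplus C $ i $ j) = (Re (C$i$j) - Re (C$j$i)) / 2"
        by (simp add: pplus_entry)
      have pm: "Im (pplus C $ i $ j) = (Im (C$i$j) + Im (C$j$i)) / 2"
        by (simp add: pplus_entry)
      have "Z $ i $ j = pplus C $ i $ j * (1 + complex_of_real K)"
      proof (rule complex_eqI)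
        show "Re (Z $ i $ j) = Re (pplus C $ i $ j * (1 + complex_of_real K))"
          using r unfolding kk[symmetric] pr[symmetric] by simp
        show "Im (Z $ i $ j) = Im (pplus C $ i $ j * (1 + complex_of_real K))"
          using m unfolding kk[symmetric] pm[symmetric] by simp
      qed
      thus ?thesis using ent by simp
    qed }
  note E = this
  show ?thesis
    by (rule iffD2[OF vec_eq_iff], rule allI, rule iffD2[OF vec_eq_iff], rule allI, rule E)
qed




lemma mm_uminus_right: "(A::'n::finite cmat) ** (- B) = - (A ** B)"
  using mm_scaleR_right[of A "-1" B] by simp

lemma mm_uminus_left: "(- A::'n::finite cmat) ** B = - (A ** B)"
  using mm_scaleR_left[of "-1" A B] by simp

lemma mm_diff_right: "(A::'n::finite cmat) ** (B - C) = A ** B - A ** C"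
  using matrix_add_ldistrib[of A B "- C"] by (simp add: mm_uminus_right)

lemma pair_dmat: "pair X (dmat x) = (\<Sum>a\<in>UNIV. Re (X $ a $ a) * x $ a)"
  by (simp add: pair_def mtrace_def dmat_mult_right Re_sum)

lemma pair_comm: "pair A (comm B J) = - pair (comm A J) (B::'n::finite cmat)"
proof -
  have 1: "pair A (B ** J) = pair (A ** B) J" by (simp add: pair_assoc)
  have 2: "pair A (J ** B) = pair (A ** J) B" by (simp add: pair_assoc)
  have 3: "pair (J ** A) B = pair (A ** B) J" using pair_assoc[of J A B] pair_sym[of J "A ** B"] by simp
  show ?thesis unfolding comm_def pair_diff_right pair_diff_left 1 2 3 by simp
qed

lemma ev_regular:
  assumes "regular (q::real^'n::{finite,linorder})"
  shows "eventually (\<lambda>t. regular (q + t *\<^sub>R x)) (nhds 0)"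
proof -
  have "eventually (\<lambda>t. i < j \<longrightarrow> (q + t *\<^sub>R x) $ j < (q + t *\<^sub>R x) $ i) (nhds (0::real))" for i j
  proof (cases "i < j")
    case True
    have pos: "q $ i - q $ j > 0" using assms True by (simp add: regular_def)
    have "((\<lambda>t. (q $ i + t * x $ i) - (q $ j + t * x $ j)) \<longlongrightarrow> (q $ i + 0 * x $ i) - (q $ j + 0 * x $ j)) (nhds 0)"
      by (intro tendsto_intros filterlim_ident)
    hence "((\<lambda>t. (q $ i + t * x $ i) - (q $ j + t * x $ j)) \<longlongrightarrow> q $ i - q $ j) (nhds 0)" by simp
    from order_tendstoD(1)[OF this pos]
    show ?thesis by eventually_elim simp
  next
    case False
    thus ?thesis by simp
  qed
  hence "eventually (\<lambda>t. \<forall>i. \<forall>j. i < j \<longrightarrow> (q + t *\<^sub>R x) $ j < (q + t *\<^sub>R x) $ i) (nhds (0::real))"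
    by (intro eventually_all_finite allI)
  thus ?thesis by (simp add: regular_def)
qed

lemma um_neg: "um i j (- c) = - um i j c"
  by (simp add: um_def vec_eq_iff)
lemma adjY1: "adj (um i j 1 + um j i (-1)) = - (um i j 1 + um j i (-1))"
  by (simp only: adj_add adj_um complex_cnj_one complex_cnj_minus, simp only: um_neg, simp add: algebra_simps)
lemma adjY2: "adj (um i j \<i> + um j i \<i>) = - (um i j \<i> + um j i \<i>)"
  by (simp only: adj_add adj_um complex_cnj_i, simp only: um_neg, simp add: algebra_simps)
lemma exp_cancel: "complex_of_real (exp (a - b)) * complex_of_real (exp b) = complex_of_real (exp a)"
proof -
  have "exp (a - b) * exp b = exp a" by (simp add: exp_diff)
  thus ?thesis by (simp only: of_real_mult[symmetric])
qed
lemma W1: "(um i j (complex_of_real (exp (q$i - q$j))) + um j i (- complex_of_real (exp (q$j - q$i)))) ** dmat (\<chi> i. exp (q$i))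
     = dmat (\<chi> i. exp (q$i)) ** (um i j 1 + um j i (-1))"
  by (simp only: matrix_add_rdistrib matrix_add_ldistrib um_dmat dmat_um vec_lambda_beta exp_cancel
        mult_minus_left mult_1_right mult_minus1_right)
lemma W2: "(um i j (\<i> * complex_of_real (exp (q$i - q$j))) + um j i (\<i> * complex_of_real (exp (q$j - q$i)))) ** dmat (\<chi> i. exp (q$i))
     = dmat (\<chi> i. exp (q$i)) ** (um i j \<i> + um j i \<i>)"
  by (simp only: matrix_add_rdistrib matrix_add_ldistrib um_dmat dmat_um vec_lambda_beta exp_cancel
        mult.assoc mult.commute[of "complex_of_real _" \<i>])

lemma regular_distinct:
  assumes r: "regular (q::real^'n::{finite,linorder})" and ij: "(i::'n) \<noteq> j"
  shows "q $ i \<noteq> q $ j"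
proof -
  have "i < j \<or> j < i" using ij by (simp add: neq_iff)
  thus ?thesis
  proof
    assume "i < j" hence "q $ j < q $ i" using r by (simp add: regular_def)
    thus ?thesis by simp
  next
    assume "j < i" hence "q $ i < q $ j" using r by (simp add: regular_def)
    thus ?thesis by simp
  qed
qed

theorem lemma3p3:
  fixes F :: "('n::{finite,linorder}) cmat \<times> 'n cmat \<Rightarrow> real"
    and f :: "'n rvec \<Rightarrow> 'n cmat \<Rightarrow> real"
    and q :: "'n rvec" and J :: "'n cmat"
  assumes "F \<in> inv_smooth"
    and "\<forall>q' J'. regular q' \<longrightarrow> f q' J' = F (mexp (dmat q'), J')"
    and "regular q"
  shows "nabla1 F (mexp (dmat q)) J =
           pplus (comm (d2 f q J) J) + nabla1_0 f q J + Rq q (pplus (comm (d2 f q J) J))"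
proof -
  define g where "g = mexp (dmat q)"
  define eg where "eg = (\<chi> i. exp (q $ i))"
  have g_eq: "g = dmat eg" unfolding g_def eg_def by (rule mexp_dmat)
  have ginv: "invertible g" unfolding invertible_def g_eq
    by (rule exI[of _ "dmat (\<chi> i. exp (- q $ i))"]) (simp add: dmat_mult eg_def exp_minus mat1_dmat)
  have gJ: "(g, J) \<in> MM" using ginv by (simp add: MM_def)
  have sm: "smooth_on MM F" using assms(1) by (simp add: inv_smooth_def)
  have invR: "F (g ** adj \<eta>, J) = F (g, J)" if "\<eta> \<in> unitary" for \<eta>
    using assms(1) gJ that unfolding inv_smooth_def by fastforce
  have invL: "F (\<eta> ** g, \<eta> ** J ** adj \<eta>) = F (g, J)" if "\<eta> \<in> unitary" for \<eta>
    using assms(1) gJ that unfolding inv_smooth_def by fastforce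
  obtain F' where dF: "\<forall>x\<in>MM. (F has_derivative F' x) (at x)"
    using sm by (rule smooth_on.cases) blast
  define L where "L = F' (g, J)"
  have hL: "(F has_derivative L) (at (g, J))" using dF gJ by (simp add: L_def)
  have linL: "linear L" by (rule has_derivative_linear[OF hL])
  have chain: "((\<lambda>t. F (\<gamma> t)) has_real_derivative L v) (at 0)"
    if "\<gamma> 0 = (g, J)" "(\<gamma> has_derivative (\<lambda>h. h *\<^sub>R v)) (at 0)" for \<gamma> v
    using chain_real[of F L \<gamma> v] hL that by simp

  have linD: "linear (\<lambda>X. L (X ** g, 0))"
  proof (rule linearI)
    fix x y :: "'n cmat" and c :: real
    show "L ((x + y) ** g, 0) = L (x ** g, 0) + L (y ** g, 0)"
      using linear_add[OF linL, of "(x ** g, 0)" "(y ** g, 0)"] by (simp add: matrix_add_rdistrib)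
    show "L ((c *\<^sub>R x) ** g, 0) = c *\<^sub>R L (x ** g, 0)"
      using linear_scale[OF linL, of c "(x ** g, 0)"] by (simp add: mm_scaleR_left)
  qed
  obtain Z' where Z': "\<And>X. L (X ** g, 0) = pair Z' X" using riesz[OF linD] by blast

  have dZ: "((\<lambda>t. F (mexp (t *\<^sub>R X) ** g, J)) has_real_derivative pair Z' X) (at 0)" for X
  proof -
    have d1: "((\<lambda>t. mexp (t *\<^sub>R X) ** g) has_derivative (\<lambda>h. (h *\<^sub>R X) ** g)) (at 0)"
      using bounded_linear.has_derivative[OF bl_right mexp_deriv] .
    have d: "((\<lambda>t. (mexp (t *\<^sub>R X) ** g, J)) has_derivative (\<lambda>h. h *\<^sub>R (X ** g, 0))) (at 0)"
      by (rule has_derivative_eq_rhs[OF has_derivative_Pair[OF d1 has_derivative_const]])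
         (simp add: fun_eq_iff mm_scaleR_left)
    have "(\<lambda>t. (mexp (t *\<^sub>R X) ** g, J)) 0 = (g, J)" by (simp add: mexp_zero)
    from chain[OF this d] show ?thesis by (simp add: Z')
  qed

  have nab: "nabla1 F g J = Z'"
    unfolding nabla1_def
  proof (rule the_equality)
    show "\<forall>X. ((\<lambda>t. F (mexp (t *\<^sub>R X) ** g, J)) has_real_derivative pair Z' X) (at 0)"
      using dZ by blast
  next
    fix Y assume H: "\<forall>X. ((\<lambda>t. F (mexp (t *\<^sub>R X) ** g, J)) has_real_derivative pair Y X) (at 0)"
    have "pair Y X = pair Z' X" for X using H dZ DERIV_unique by blast
    thus "Y = Z'" by (rule pair_nondeg)
  qed

  have linE: "linear (\<lambda>X. L (0, X))"
  proof (rule linearI)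
    fix x y :: "'n cmat" and c :: real
    show "L (0, x + y) = L (0, x) + L (0, y)"
      using linear_add[OF linL, of "(0, x)" "(0, y)"] by simp
    show "L (0, c *\<^sub>R x) = c *\<^sub>R L (0, x)"
      using linear_scale[OF linL, of c "(0, x)"] by simp
  qed
  obtain Yd where Yd: "\<And>X. L (0, X) = pair Yd X" using riesz[OF linE] by blast

  have dY: "((\<lambda>t. f q (J + t *\<^sub>R X)) has_real_derivative pair Yd X) (at 0)" for X
  proof -
    have fe: "(\<lambda>t. f q (J + t *\<^sub>R X)) = (\<lambda>t. F (g, J + t *\<^sub>R X))"
      using assms(2) assms(3) by (simp add: g_def)
    have d1: "((\<lambda>t. J + t *\<^sub>R X) has_derivative (\<lambda>h. h *\<^sub>R X)) (at 0)"
      by (auto intro!: derivative_eq_intros)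
    have d: "((\<lambda>t. (g, J + t *\<^sub>R X)) has_derivative (\<lambda>h. h *\<^sub>R (0, X))) (at 0)"
      by (rule has_derivative_eq_rhs[OF has_derivative_Pair[OF has_derivative_const d1]])
         (simp add: fun_eq_iff)
    have "(\<lambda>t. (g, J + t *\<^sub>R X)) 0 = (g, J)" by simp
    from chain[OF this d] show ?thesis by (simp add: fe Yd)
  qed
  have dd: "d2 f q J = Yd"
    unfolding d2_def
  proof (rule the_equality)
    show "\<forall>X. ((\<lambda>t. f q (J + t *\<^sub>R X)) has_real_derivative pair Yd X) (at 0)"
      using dY by blast
  next
    fix Y assume H: "\<forall>X. ((\<lambda>t. f q (J + t *\<^sub>R X)) has_real_derivative pair Y X) (at 0)"
    have "pair Y X = pair Yd X" for X using H dY DERIV_unique by blast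
    thus "Y = Yd" by (rule pair_nondeg)
  qed

  define C where "C = comm Yd J"
  have AL: "pair Z' Y = pair C Y" if aY: "adj Y = - Y" for Y
  proof -
    define \<gamma> where "\<gamma> = (\<lambda>t. (mexp (t *\<^sub>R Y) ** g, mexp (t *\<^sub>R Y) ** J ** mexp (t *\<^sub>R (- Y))))"
    have const: "F (\<gamma> t) = F (g, J)" for t
    proof -
      have "adj (mexp (t *\<^sub>R Y)) = mexp (t *\<^sub>R (- Y))" using aY by (simp add: adj_mexp adj_scaleR adj_uminus)
      thus ?thesis using invL[OF mexp_unitary[OF aY, of t]] by (simp add: \<gamma>_def)
    qed
    have d1: "((\<lambda>t. mexp (t *\<^sub>R Y) ** g) has_derivative (\<lambda>h. (h *\<^sub>R Y) ** g)) (at 0)"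
      using bounded_linear.has_derivative[OF bl_right mexp_deriv] .
    have d2a: "((\<lambda>t. mexp (t *\<^sub>R Y) ** J) has_derivative (\<lambda>h. (h *\<^sub>R Y) ** J)) (at 0)"
      using bounded_linear.has_derivative[OF bl_right mexp_deriv] .
    have d2b: "((\<lambda>t. mexp (t *\<^sub>R (- Y))) has_derivative (\<lambda>h. h *\<^sub>R (- Y))) (at 0)"
      by (rule mexp_deriv)
    have d2: "((\<lambda>t. mexp (t *\<^sub>R Y) ** J ** mexp (t *\<^sub>R (- Y))) has_derivative
        (\<lambda>h. (mexp (0 *\<^sub>R Y) ** J) ** (h *\<^sub>R (- Y)) + ((h *\<^sub>R Y) ** J) ** mexp (0 *\<^sub>R (- Y)))) (at 0)"
      using bounded_bilinear.FDERIV[OF mm_bounded_bilinear d2a d2b] .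
    have dg: "(\<gamma> has_derivative (\<lambda>h. h *\<^sub>R (Y ** g, Y ** J - J ** Y))) (at 0)"
      unfolding \<gamma>_def
      by (rule has_derivative_eq_rhs[OF has_derivative_Pair[OF d1 d2]])
         (simp add: fun_eq_iff mexp_zero mm_scaleR_left mm_scaleR_right mm_uminus_right scaleR_diff_right)
    have "\<gamma> 0 = (g, J)" by (simp add: \<gamma>_def mexp_zero)
    from chain[OF this dg]
    have D1: "((\<lambda>t. F (\<gamma> t)) has_real_derivative L (Y ** g, Y ** J - J ** Y)) (at 0)" .
    have D2: "((\<lambda>t. F (\<gamma> t)) has_real_derivative 0) (at 0)" unfolding const by simp
    have z: "L (Y ** g, Y ** J - J ** Y) = 0" using DERIV_unique[OF D1 D2] .
    have "L (Y ** g, Y ** J - J ** Y) = L (Y ** g, 0) + L (0, Y ** J - J ** Y)"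
      using linear_add[OF linL, of "(Y ** g, 0)" "(0, Y ** J - J ** Y)"] by simp
    hence "pair Z' Y + pair Yd (comm Y J) = 0" using z Z' Yd by (simp add: comm_def)
    thus ?thesis using pair_comm[of Yd Y J] by (simp add: C_def)
  qed

  have AR: "pair Z' W = 0" if aY: "adj Y = - Y" and WY: "W ** g = g ** Y" for Y W
  proof -
    have const: "F (g ** mexp (t *\<^sub>R Y), J) = F (g, J)" for t
    proof -
      have "adj (mexp ((-t) *\<^sub>R Y)) = mexp (t *\<^sub>R Y)" using aY by (simp add: adj_mexp adj_scaleR adj_uminus)
      thus ?thesis using invR[OF mexp_unitary[OF aY, of "-t"]] by simp
    qed
    have d1: "((\<lambda>t. g ** mexp (t *\<^sub>R Y)) has_derivative (\<lambda>h. g ** (h *\<^sub>R Y))) (at 0)"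
      using bounded_linear.has_derivative[OF bl_left mexp_deriv] .
    have d: "((\<lambda>t. (g ** mexp (t *\<^sub>R Y), J)) has_derivative (\<lambda>h. h *\<^sub>R (g ** Y, 0))) (at 0)"
      by (rule has_derivative_eq_rhs[OF has_derivative_Pair[OF d1 has_derivative_const]])
         (simp add: fun_eq_iff mm_scaleR_right)
    have "(\<lambda>t. (g ** mexp (t *\<^sub>R Y), J)) 0 = (g, J)" by (simp add: mexp_zero)
    from chain[OF this d]
    have D1: "((\<lambda>t. F (g ** mexp (t *\<^sub>R Y), J)) has_real_derivative L (g ** Y, 0)) (at 0)" .
    have D2: "((\<lambda>t. F (g ** mexp (t *\<^sub>R Y), J)) has_real_derivative 0) (at 0)" unfolding const by simp
    have "L (g ** Y, 0) = 0" using DERIV_unique[OF D1 D2] .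
    thus ?thesis using Z'[of W] WY by simp
  qed

  define v where "v = (\<chi> i. Re (Z' $ i $ i))"
  have pv: "pair Z' (dmat x) = pair (dmat v) (dmat x)" for x
    by (simp add: pair_dmat v_def dmat_diag)
  have key: "((\<lambda>t. f (q + t *\<^sub>R x) J) has_real_derivative pair (dmat v) (dmat x)) (at 0)" for x
  proof -
    have ev: "eventually (\<lambda>t. f (q + t *\<^sub>R x) J = F (mexp (t *\<^sub>R dmat x) ** g, J)) (nhds 0)"
      using ev_regular[OF assms(3), of x]
    proof eventually_elim
      case (elim t)
      have c: "(t *\<^sub>R dmat x) ** dmat q = dmat q ** (t *\<^sub>R dmat x)"
        by (simp add: mm_scaleR_left mm_scaleR_right dmat_comm)
      have "mexp (dmat (q + t *\<^sub>R x)) = mexp (t *\<^sub>R dmat x) ** g"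
        unfolding g_def dmat_add dmat_scaleR add.commute[of "dmat q"] by (rule mexp_add[OF c])
      thus ?case using assms(2) elim by simp
    qed
    have "((\<lambda>t. F (mexp (t *\<^sub>R dmat x) ** g, J)) has_real_derivative pair Z' (dmat x)) (at 0)"
      by (rule dZ)
    thus ?thesis using DERIV_cong_ev[OF refl ev, of "pair Z' (dmat x)" "pair (dmat v) (dmat x)"] pv by simp
  qed
  have n0: "nabla1_0 f q J = dmat v"
    unfolding nabla1_0_def
  proof (rule the_equality)
    show "dmat v \<in> diagH \<and> (\<forall>x. ((\<lambda>t. f (q + t *\<^sub>R x) J) has_real_derivative pair (dmat v) (dmat x)) (at 0))"
      using key by (simp add: diagH_def)
  next
    fix Y assume H: "Y \<in> diagH \<and> (\<forall>x. ((\<lambda>t. f (q + t *\<^sub>R x) J) has_real_derivative pair Y (dmat x)) (at 0))"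
    then obtain w where Yw: "Y = dmat w" by (auto simp: diagH_def)
    have e: "pair (dmat w) (dmat x) = pair (dmat v) (dmat x)" for x using H key DERIV_unique Yw by blast
    have "w $ a = v $ a" for a
    proof -
      have "pair (dmat u) (dmat (axis a 1)) = u $ a" for u
        by (simp add: pair_dmat dmat_diag axis_def if_distrib sum.delta cong: if_cong)
      thus ?thesis using e[of "axis a 1"] by simp
    qed
    hence "w = v" by (simp add: vec_eq_iff)
    thus "Y = dmat v" using Yw by simp
  qed

  have regd: "q $ i \<noteq> q $ j" if "i \<noteq> j" for i j
    by (rule regular_distinct[OF assms(3) that])
  have fin: "Z' = pplus C + dmat v + Rq q (pplus C)" unfolding v_def
  proof (rule final_entries)
    fix i j :: 'n
    show "pair Z' (um i j 1 + um j i (-1)) = pair C (um i j 1 + um j i (-1))"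
      by (rule AL) (rule adjY1)
    show "pair Z' (um i j \<i> + um j i \<i>) = pair C (um i j \<i> + um j i \<i>)"
      by (rule AL) (rule adjY2)
  next
    fix i j :: 'n assume ij: "i \<noteq> j"
    show "pair Z' (um i j (complex_of_real (exp (q$i - q$j))) + um j i (- complex_of_real (exp (q$j - q$i)))) = 0"
    proof (rule AR)
      show "adj (um i j 1 + um j i (-1)) = - (um i j 1 + um j i (-1))"
        by (rule adjY1)
      show "(um i j (complex_of_real (exp (q$i - q$j))) + um j i (- complex_of_real (exp (q$j - q$i)))) ** g
            = g ** (um i j 1 + um j i (-1))"
        unfolding g_eq eg_def by (rule W1)
    qed
    show "pair Z' (um i j (\<i> * complex_of_real (exp (q$i - q$j))) + um j i (\<i> * complex_of_real (exp (q$j - q$i)))) = 0"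
    proof (rule AR)
      show "adj (um i j \<i> + um j i \<i>) = - (um i j \<i> + um j i \<i>)"
        by (rule adjY2)
      show "(um i j (\<i> * complex_of_real (exp (q$i - q$j))) + um j i (\<i> * complex_of_real (exp (q$j - q$i)))) ** g
            = g ** (um i j \<i> + um j i \<i>)"
        unfolding g_eq eg_def by (rule W2)
    qed
    show "q $ i \<noteq> q $ j" by (rule regd[OF ij])
  qed
  show ?thesis
    unfolding g_def[symmetric] nab dd n0 C_def[symmetric] by (rule fin)
qed


end
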